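(* Let $\mu>0$, $\sigma>0$ with $\mu\ge\sqrt3\sigma$, and $\rho\in(0,1)$. Let $\omega$ be uniformly distributed on $\Omega=[\mu-\sqrt3\sigma,\mu+\sqrt3\sigma]$, let the real-time price be $p^{\omega,*}=\rho^{-1}\mathbf 1\{\omega\le\mu\}$ (faced by both participants), and let the electricity-market profits of the peaker plant $P$ (option seller) and wind producer $W$ (option buyer) be $$\pi_P^\omega=(\mu-\omega)^+(\rho^{-1}-1),\qquad \pi_W^\omega=\mu-(\mu-\omega)^+/\rho .$$ Let $\mathcal A_0=[0,1/\rho]\times[0,1/\rho]\times[0,\sqrt3\sigma]$, $\mathcal A_P=\{(q,K,\Delta)\in\mathcal A_0: K+2q\ge 1/\rho\}$ and $\mathcal A_W=\{(q,K,\Delta)\in\mathcal A_0:K+2q\le 1/\rho\}$. Consider the problem of minimizing $\mathrm{var}[\Pi_W^\omega]+\mathrm{var}[\Pi_P^\omega]$, where $$\Pi_W^\omega=\pi_W^\omega-q_W\Delta_W+(p^{\omega,*}-K_W)^+\Delta_W,\qquad \Pi_P^\omega=\pi_P^\omega+q_P\Delta_P-(p^{\omega,*}-K_P)^+\delta_P^\omega,$$ over $(q_W,K_W,\Delta_W)\in\mathcal A_W$, $(q_P,K_P,\Delta_P)\in\mathcal A_P$ and measurable $\delta_P:\Omega\to[0,\Delta_P]$, subject to $\Delta_P=\Delta_W$ and, almost surely, $\delta_P^\omega=\Delta_W\mathbf 1\{p^{\omega,*}\ge K_W\}$ and $$q_W\Delta_W-q_P\Delta_P-(p^{\omega,*}-K_W)^+\Delta_W+(p^{\omega,*}-K_P)^+\delta_P^\omega=0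 .$$ Then the optimal solutions are exactly those with $(q_W^*,K_W^*,\Delta_W^* )=(q_P^*,K_P^*,\Delta_P^* )=(q^*,K^*,\Delta^* )$ where $$\Delta^*\in\Big[\tfrac{\sqrt3\sigma(2-\rho)}{4},\ \sqrt3\sigma\Big],\qquad q^*=\frac{\sqrt3\sigma}{4\rho\Delta^*}-\frac{\sqrt3\sigma}{8\Delta^*},\qquad K^*=\frac1\rho\Big(\frac{2\Delta^*-\sqrt3\sigma}{2\Delta^*}\Big)+\frac{\sqrt3\sigma}{4\Delta^*}.$$ Moreover, $$\sum_{i\in\{W,P\}}\big(\mathrm{var}[\Pi_i^{\omega,*}]-\mathrm{var}[\pi_i^\omega]\big)=-\frac{3\sigma^2}{8}\Big(\rho^{-1}-\frac12\Big)^2<0 .$$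
   Context: $z^+:=\max\{z,0\}$; $\mathbf 1\{\cdot\}$ is an indicator. This is the centralized (market-maker) clearing of cash-settled call options (option price $q$, strike $K$, quantity $\Delta$, payoff $(p-K)^+$ per unit) between a wind producer and a peaker plant in a copperplate power system example (base-load generator with no ramping, peaker offering marginal cost $1/\rho$, zero-cost wind with available capacity $\omega$, demand $d\ge\mu+\sqrt3\sigma$), where both are risk-neutral; the acceptable sets $\mathcal A_P,\mathcal A_W$ are the risk-neutral acceptability sets in that example, and the last constraint says the market maker's merchandising surplus is zero in every scenario. *)

theory Defs
  imports "HOL-Probability.Probability"
begin

definition Omega :: "real \<Rightarrow> real \<Rightarrow> real set" where
  "Omega \<mu> \<sigma> = {\<mu> - sqrt 3 * \<sigma> .. \<mu> + sqrt 3 * \<sigma>}"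

definition unifM :: "real \<Rightarrow> real \<Rightarrow> real measure" where
  "unifM \<mu> \<sigma> = uniform_measure lborel (Omega \<mu> \<sigma>)"

definition var :: "real measure \<Rightarrow> (real \<Rightarrow> real) \<Rightarrow> real" where
  "var M X = (\<integral>x. (X x - (\<integral>y. X y \<partial>M))\<^sup>2 \<partial>M)"

definition price :: "real \<Rightarrow> real \<Rightarrow> real \<Rightarrow> real" where
  "price \<rho> \<mu> \<omega> = (if \<omega> \<le> \<mu> then 1 / \<rho> else 0)"

definition piP :: "real \<Rightarrow> real \<Rightarrow> real \<Rightarrow> real" where
  "piP \<rho> \<mu> \<omega> = max (\<mu> - \<omega>) 0 * (1 / \<rho> - 1)"

definition piW :: "real \<Rightarrow> real \<Rightarrow> real \<Rightarrow> real" where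
  "piW \<rho> \<mu> \<omega> = \<mu> - max (\<mu> - \<omega>) 0 / \<rho>"

definition A0 :: "real \<Rightarrow> real \<Rightarrow> (real \<times> real \<times> real) set" where
  "A0 \<rho> \<sigma> = {0 .. 1 / \<rho>} \<times> {0 .. 1 / \<rho>} \<times> {0 .. sqrt 3 * \<sigma>}"

definition AP :: "real \<Rightarrow> real \<Rightarrow> (real \<times> real \<times> real) set" where
  "AP \<rho> \<sigma> = {(q, K, \<Delta>) \<in> A0 \<rho> \<sigma>. K + 2 * q \<ge> 1 / \<rho>}"

definition AW :: "real \<Rightarrow> real \<Rightarrow> (real \<times> real \<times> real) set" where
  "AW \<rho> \<sigma> = {(q, K, \<Delta>) \<in> A0 \<rho> \<sigma>. K + 2 * q \<le> 1 / \<rho>}"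

definition PiW :: "real \<Rightarrow> real \<Rightarrow> real \<times> real \<times> real \<Rightarrow> real \<Rightarrow> real" where
  "PiW \<rho> \<mu> tW \<omega> = (case tW of (q, K, \<Delta>) \<Rightarrow>
     piW \<rho> \<mu> \<omega> - q * \<Delta> + max (price \<rho> \<mu> \<omega> - K) 0 * \<Delta>)"

definition PiP :: "real \<Rightarrow> real \<Rightarrow> real \<times> real \<times> real \<Rightarrow> (real \<Rightarrow> real) \<Rightarrow> real \<Rightarrow> real" where
  "PiP \<rho> \<mu> tP \<delta> \<omega> = (case tP of (q, K, \<Delta>) \<Rightarrow>
     piP \<rho> \<mu> \<omega> + q * \<Delta> - max (price \<rho> \<mu> \<omega> - K) 0 * \<delta> \<omega>)"

definition feasible :: "real \<Rightarrow> real \<Rightarrow> real \<Rightarrow> real \<times> real \<times> real \<Rightarrow> real \<times> real \<times> real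
    \<Rightarrow> (real \<Rightarrow> real) \<Rightarrow> bool" where
  "feasible \<rho> \<mu> \<sigma> tW tP \<delta> = (case tW of (qW, KW, \<Delta>W) \<Rightarrow> case tP of (qP, KP, \<Delta>P) \<Rightarrow>
     tW \<in> AW \<rho> \<sigma> \<and> tP \<in> AP \<rho> \<sigma> \<and>
     \<delta> \<in> borel_measurable (unifM \<mu> \<sigma>) \<and> (\<forall>\<omega>\<in>Omega \<mu> \<sigma>. 0 \<le> \<delta> \<omega> \<and> \<delta> \<omega> \<le> \<Delta>P) \<and>
     \<Delta>P = \<Delta>W \<and>
     (AE \<omega> in unifM \<mu> \<sigma>. \<delta> \<omega> = \<Delta>W * (if price \<rho> \<mu> \<omega> \<ge> KW then 1 else 0)) \<and>
     (AE \<omega> in unifM \<mu> \<sigma>. qW * \<Delta>W - qP * \<Delta>P - max (price \<rho> \<mu> \<omega> - KW) 0 * \<Delta>W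
                           + max (price \<rho> \<mu> \<omega> - KP) 0 * \<delta> \<omega> = 0))"

definition objective :: "real \<Rightarrow> real \<Rightarrow> real \<Rightarrow> real \<times> real \<times> real \<Rightarrow> real \<times> real \<times> real
    \<Rightarrow> (real \<Rightarrow> real) \<Rightarrow> real" where
  "objective \<rho> \<mu> \<sigma> tW tP \<delta> =
     var (unifM \<mu> \<sigma>) (PiW \<rho> \<mu> tW) + var (unifM \<mu> \<sigma>) (PiP \<rho> \<mu> tP \<delta>)"

definition optimal :: "real \<Rightarrow> real \<Rightarrow> real \<Rightarrow> real \<times> real \<times> real \<Rightarrow> real \<times> real \<times> real
    \<Rightarrow> (real \<Rightarrow> real) \<Rightarrow> bool" where
  "optimal \<rho> \<mu> \<sigma> tW tP \<delta> = (feasible \<rho> \<mu> \<sigma> tW tP \<delta> \<and>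
     (\<forall>tW' tP' \<delta>'. feasible \<rho> \<mu> \<sigma> tW' tP' \<delta>' \<longrightarrow>
        objective \<rho> \<mu> \<sigma> tW tP \<delta> \<le> objective \<rho> \<mu> \<sigma> tW' tP' \<delta>'))"

end

theory Submission
  imports Defs
begin


lemma emeas_Omega: "\<sigma> > 0 \<Longrightarrow> emeasure lborel (Omega \<mu> \<sigma>) = ennreal (2 * sqrt 3 * \<sigma>)"
  unfolding Omega_def by simp

lemma prob_unif: "\<sigma> > 0 \<Longrightarrow> prob_space (unifM \<mu> \<sigma>)"
  unfolding unifM_def by (rule prob_space_uniform_measure) (auto simp: emeas_Omega)

lemma unif_density: assumes "\<sigma> > 0"
  shows "unifM \<mu> \<sigma> = density lborel (\<lambda>x. ennreal (indicator (Omega \<mu> \<sigma>) x / (2 * sqrt 3 * \<sigma>)))"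
  unfolding unifM_def uniform_measure_def emeas_Omega[OF assms]
proof -
  have "\<And>x. indicator (Omega \<mu> \<sigma>) x / ennreal (2 * sqrt 3 * \<sigma>) = ennreal (indicator (Omega \<mu> \<sigma>) x / (2 * sqrt 3 * \<sigma>))"
    using divide_ennreal[of 1 "2 * sqrt 3 * \<sigma>"] assms by (simp split: split_indicator)
  then show "density lborel (\<lambda>x. indicator (Omega \<mu> \<sigma>) x / ennreal (2 * sqrt 3 * \<sigma>)) = density lborel (\<lambda>x. ennreal (indicator (Omega \<mu> \<sigma>) x / (2 * sqrt 3 * \<sigma>)))"
    by simp
qed

lemma meas_unif[measurable_cong]: "sets (unifM \<mu> \<sigma>) = sets borel"
  unfolding unifM_def by simp

lemma int_unif: assumes "\<sigma> > 0" "f \<in> borel_measurable borel"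
  shows "integral\<^sup>L (unifM \<mu> \<sigma>) f = integral\<^sup>L lborel (\<lambda>x. indicator (Omega \<mu> \<sigma>) x / (2 * sqrt 3 * \<sigma>) * f x)"
  unfolding unif_density[OF assms(1)]
  apply (subst integral_density)
  using assms by (auto simp: Omega_def)

lemma intM: assumes "\<sigma> > 0" "f \<in> borel_measurable borel" "\<forall>x\<in>Omega \<mu> \<sigma>. \<bar>f x\<bar> \<le> (C::real)"
  shows "integrable (unifM \<mu> \<sigma>) f"
proof -
  interpret prob_space "unifM \<mu> \<sigma>" by (rule prob_unif[OF assms(1)])
  show ?thesis
  proof (rule integrable_const_bound[where B=C])
    show "AE x in unifM \<mu> \<sigma>. norm (f x) \<le> C"
      unfolding unifM_def by (rule AE_uniform_measureI) (use assms in \<open>auto simp: Omega_def\<close>)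
    show "f \<in> borel_measurable (unifM \<mu> \<sigma>)" using assms(2) by (simp add: measurable_cong_sets[OF meas_unif refl])
  qed
qed

lemma EX: assumes "\<sigma> > 0"
  shows "integral\<^sup>L (unifM \<mu> \<sigma>) (\<lambda>x. max (\<mu> - x) 0) = sqrt 3 * \<sigma> / 4"
proof -
  define s where "s = sqrt 3 * \<sigma>"
  have s: "s > 0" using assms by (simp add: s_def)
  have "integral\<^sup>L (unifM \<mu> \<sigma>) (\<lambda>x. max (\<mu> - x) 0)
     = integral\<^sup>L lborel (\<lambda>x. indicator (Omega \<mu> \<sigma>) x / (2 * sqrt 3 * \<sigma>) * max (\<mu> - x) 0)"
    by (rule int_unif[OF assms]) measurable
  also have "\<dots> = integral\<^sup>L lborel (\<lambda>x. indicator {\<mu> - s .. \<mu>} x *\<^sub>R ((\<mu> - x) / (2 * s)))"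
    by (rule Bochner_Integration.integral_cong) (auto simp: Omega_def s_def indicator_def)
  also have "\<dots> = (- ((\<mu> - \<mu>)^2) / (4 * s)) - (- ((\<mu> - (\<mu> - s))^2) / (4 * s))"
  proof (rule integral_FTC_atLeastAtMost)
    show "\<mu> - s \<le> \<mu>" using s by simp
    show "continuous_on {\<mu> - s..\<mu>} (\<lambda>x. (\<mu> - x) / (2 * s))"
      using s by (intro continuous_intros) auto
    fix x assume "\<mu> - s \<le> x" "x \<le> \<mu>"
    show "((\<lambda>x. - ((\<mu> - x)^2) / (4 * s)) has_vector_derivative (\<mu> - x) / (2 * s)) (at x within {\<mu> - s..\<mu>})"
      unfolding has_real_derivative_iff_has_vector_derivative[symmetric]
      using s by (auto intro!: derivative_eq_intros simp: field_simps power2_eq_square)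
  qed
  also have "\<dots> = s / 4" using s by (simp add: field_simps power2_eq_square)
  finally show ?thesis by (simp add: s_def)
qed

lemma EI: assumes "\<sigma> > 0"
  shows "integral\<^sup>L (unifM \<mu> \<sigma>) (\<lambda>x. if x \<le> \<mu> then 1 else 0) = (1::real) / 2"
proof -
  define s where "s = sqrt 3 * \<sigma>"
  have s: "s > 0" using assms by (simp add: s_def)
  have "integral\<^sup>L (unifM \<mu> \<sigma>) (\<lambda>x. if x \<le> \<mu> then 1 else 0)
     = integral\<^sup>L lborel (\<lambda>x. indicator (Omega \<mu> \<sigma>) x / (2 * sqrt 3 * \<sigma>) * (if x \<le> \<mu> then 1 else 0))"
    by (rule int_unif[OF assms]) measurable
  also have "\<dots> = integral\<^sup>L lborel (\<lambda>x. indicator {\<mu> - s .. \<mu>} x *\<^sub>R (1 / (2 * s)))"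
    by (rule Bochner_Integration.integral_cong) (auto simp: Omega_def s_def indicator_def)
  also have "\<dots> = \<mu> / (2 * s) - (\<mu> - s) / (2 * s)"
  proof (rule integral_FTC_atLeastAtMost)
    show "\<mu> - s \<le> \<mu>" using s by simp
    show "continuous_on {\<mu> - s..\<mu>} (\<lambda>x. 1 / (2 * s))"
      by (intro continuous_intros) 
    fix x assume "\<mu> - s \<le> x" "x \<le> \<mu>"
    show "((\<lambda>x. x / (2 * s)) has_vector_derivative 1 / (2 * s)) (at x within {\<mu> - s..\<mu>})"
      unfolding has_real_derivative_iff_has_vector_derivative[symmetric]
      using s by (auto intro!: derivative_eq_intros simp: field_simps)
  qed
  also have "\<dots> = 1 / 2" using s by (simp add: field_simps)
  finally show ?thesis .
qed

lemma varlin: assumes "\<sigma> > 0"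
  shows "var (unifM \<mu> \<sigma>) (\<lambda>\<omega>. c0 + c1 * max (\<mu> - \<omega>) 0 + b * (if \<omega> \<le> \<mu> then 1 else 0))
    = c1\<^sup>2 * var (unifM \<mu> \<sigma>) (\<lambda>\<omega>. max (\<mu> - \<omega>) 0) + b\<^sup>2 / 4 + c1 * b * (sqrt 3 * \<sigma>) / 4"
proof -
  define M where "M = unifM \<mu> \<sigma>"
  interpret prob_space M unfolding M_def by (rule prob_unif[OF assms])
  define X where "X = (\<lambda>\<omega>::real. max (\<mu> - \<omega>) 0)"
  define I where "I = (\<lambda>\<omega>::real. if \<omega> \<le> \<mu> then (1::real) else 0)"
  define s where "s = sqrt 3 * \<sigma>"
  have s: "s > 0" using assms by (simp add: s_def)
  have mX: "X \<in> borel_measurable borel" unfolding X_def by measurable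
  have mI: "I \<in> borel_measurable borel" unfolding I_def by measurable
  have iX[simp]: "integrable M X" unfolding M_def
    by (rule intM[OF assms mX, where C=s]) (auto simp: X_def Omega_def s_def)
  have iX2[simp]: "integrable M (\<lambda>x. (X x)\<^sup>2)" unfolding M_def
    by (rule intM[OF assms _, where C="s\<^sup>2"]) (use mX in measurable, auto simp: X_def Omega_def s_def intro!: power_mono)
  have iI[simp]: "integrable M I" unfolding M_def
    by (rule intM[OF assms mI, where C=1]) (auto simp: I_def)
  have EX: "expectation X = s / 4" unfolding M_def X_def s_def by (rule EX[OF assms])
  have EI: "expectation I = 1 / 2" unfolding M_def I_def by (rule EI[OF assms])
  have XI: "\<And>x. X x * I x = X x" by (simp add: X_def I_def)
  have II: "\<And>x. I x * I x = I x" by (simp add: I_def)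
  have hsq: "(\<lambda>x. (c0 + c1 * X x + b * I x)\<^sup>2) = (\<lambda>x. c0\<^sup>2 + c1\<^sup>2 * (X x)\<^sup>2 + (b\<^sup>2 + 2 * c0 * b) * I x + (2 * c0 * c1 + 2 * c1 * b) * X x)"
  proof
    fix x
    have "(c0 + c1 * X x + b * I x)\<^sup>2 = c0\<^sup>2 + c1\<^sup>2 * (X x)\<^sup>2 + b\<^sup>2 * (I x * I x) + 2 * c0 * c1 * X x + 2 * c0 * b * I x + 2 * c1 * b * (X x * I x)"
      by (simp add: power2_eq_square algebra_simps)
    then show "(c0 + c1 * X x + b * I x)\<^sup>2 = c0\<^sup>2 + c1\<^sup>2 * (X x)\<^sup>2 + (b\<^sup>2 + 2 * c0 * b) * I x + (2 * c0 * c1 + 2 * c1 * b) * X x"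
      unfolding XI II by (simp add: algebra_simps)
  qed
  have ih: "integrable M (\<lambda>x. c0 + c1 * X x + b * I x)" by simp
  have ih2: "integrable M (\<lambda>x. (c0 + c1 * X x + b * I x)\<^sup>2)" unfolding hsq by simp
  have Eh: "expectation (\<lambda>x. c0 + c1 * X x + b * I x) = c0 + c1 * (s/4) + b / 2"
    by (simp add: EX EI prob_space)
  have Eh2: "expectation (\<lambda>x. (c0 + c1 * X x + b * I x)\<^sup>2) = c0\<^sup>2 + c1\<^sup>2 * expectation (\<lambda>x. (X x)\<^sup>2) + (b\<^sup>2 + 2 * c0 * b) / 2 + (2 * c0 * c1 + 2 * c1 * b) * (s / 4)"
    unfolding hsq by (simp add: EX EI prob_space)
  have vX: "variance X = expectation (\<lambda>x. (X x)\<^sup>2) - (s/4)\<^sup>2"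
    using variance_eq[OF iX iX2] unfolding EX .
  have "variance (\<lambda>x. c0 + c1 * X x + b * I x) = c1\<^sup>2 * variance X + b\<^sup>2 / 4 + c1 * b * s / 4"
  proof -
    have "variance (\<lambda>x. c0 + c1 * X x + b * I x) = expectation (\<lambda>x. (c0 + c1 * X x + b * I x)\<^sup>2) - (expectation (\<lambda>x. c0 + c1 * X x + b * I x))\<^sup>2"
      by (rule variance_eq[OF ih ih2])
    also have "\<dots> = c1\<^sup>2 * (expectation (\<lambda>x. (X x)\<^sup>2) - (s/4)\<^sup>2) + b\<^sup>2 / 4 + c1 * b * s / 4"
      unfolding Eh Eh2 by (simp add: power2_eq_square algebra_simps)
    finally show ?thesis unfolding vX .
  qed
  then show ?thesis unfolding var_def M_def X_def I_def s_def by simp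
qed

lemma var_cong_AE: assumes "f \<in> borel_measurable M" "g \<in> borel_measurable M" "AE x in M. f x = g x"
  shows "var M f = var M g"
proof -
  have e: "integral\<^sup>L M f = integral\<^sup>L M g" by (rule integral_cong_AE[OF assms])
  show ?thesis unfolding var_def e
    by (rule integral_cong_AE) (use assms in \<open>auto elim: AE_mp\<close>)
qed

lemma var_feas:
  assumes s: "\<sigma> > 0" and r: "0 < \<rho>" and F: "feasible \<rho> \<mu> \<sigma> (qW, KW, \<Delta>W) (qP, KP, \<Delta>P) \<delta>"
  shows "var (unifM \<mu> \<sigma>) (PiW \<rho> \<mu> (qW, KW, \<Delta>W)) = var (unifM \<mu> \<sigma>) (piW \<rho> \<mu>)
            + ((1/\<rho> - KW) * \<Delta>W)\<^sup>2 / 4 - ((1/\<rho> - KW) * \<Delta>W) * (1/\<rho>) * (sqrt 3 * \<sigma>) / 4"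
    and "var (unifM \<mu> \<sigma>) (PiP \<rho> \<mu> (qP, KP, \<Delta>P) \<delta>) = var (unifM \<mu> \<sigma>) (piP \<rho> \<mu>)
            + ((1/\<rho> - KW) * \<Delta>W)\<^sup>2 / 4 - ((1/\<rho> - KW) * \<Delta>W) * (1/\<rho> - 1) * (sqrt 3 * \<sigma>) / 4"
proof -
  define \<beta> where "\<beta> = (1/\<rho> - KW) * \<Delta>W"
  define VX where "VX = var (unifM \<mu> \<sigma>) (\<lambda>\<omega>. max (\<mu> - \<omega>) 0)"
  from F have KW: "0 \<le> KW" "KW \<le> 1/\<rho>" and dm[measurable]: "\<delta> \<in> borel_measurable (unifM \<mu> \<sigma>)"
    and bal: "AE \<omega> in unifM \<mu> \<sigma>. qW * \<Delta>W - qP * \<Delta>P - max (price \<rho> \<mu> \<omega> - KW) 0 * \<Delta>W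
                           + max (price \<rho> \<mu> \<omega> - KP) 0 * \<delta> \<omega> = 0"
    unfolding feasible_def AW_def A0_def by auto
  have e1: "piW \<rho> \<mu> = (\<lambda>\<omega>. \<mu> + (- 1/\<rho>) * max (\<mu> - \<omega>) 0 + 0 * (if \<omega> \<le> \<mu> then 1 else 0))"
    by (auto simp: piW_def)
  have e2: "PiW \<rho> \<mu> (qW, KW, \<Delta>W) = (\<lambda>\<omega>. (\<mu> - qW * \<Delta>W) + (- 1/\<rho>) * max (\<mu> - \<omega>) 0 + \<beta> * (if \<omega> \<le> \<mu> then 1 else 0))"
    using KW by (auto simp: PiW_def piW_def price_def \<beta>_def algebra_simps)
  have e3: "piP \<rho> \<mu> = (\<lambda>\<omega>. 0 + (1/\<rho> - 1) * max (\<mu> - \<omega>) 0 + 0 * (if \<omega> \<le> \<mu> then 1 else 0))"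
    by (auto simp: piP_def)
  have e4: "var (unifM \<mu> \<sigma>) (PiP \<rho> \<mu> (qP, KP, \<Delta>P) \<delta>) = var (unifM \<mu> \<sigma>) (\<lambda>\<omega>. qW * \<Delta>W + (1/\<rho> - 1) * max (\<mu> - \<omega>) 0 + (- \<beta>) * (if \<omega> \<le> \<mu> then 1 else 0))"
  proof (rule var_cong_AE)
    show "PiP \<rho> \<mu> (qP, KP, \<Delta>P) \<delta> \<in> borel_measurable (unifM \<mu> \<sigma>)"
      unfolding PiP_def piP_def price_def by measurable
    show "(\<lambda>\<omega>. qW * \<Delta>W + (1/\<rho> - 1) * max (\<mu> - \<omega>) 0 + (- \<beta>) * (if \<omega> \<le> \<mu> then 1 else 0)) \<in> borel_measurable (unifM \<mu> \<sigma>)"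
      by measurable
    show "AE x in unifM \<mu> \<sigma>. PiP \<rho> \<mu> (qP, KP, \<Delta>P) \<delta> x = qW * \<Delta>W + (1/\<rho> - 1) * max (\<mu> - x) 0 + (- \<beta>) * (if x \<le> \<mu> then 1 else 0)"
      using bal
    proof (rule AE_mp, intro AE_I2 impI)
      fix x assume b: "qW * \<Delta>W - qP * \<Delta>P - max (price \<rho> \<mu> x - KW) 0 * \<Delta>W + max (price \<rho> \<mu> x - KP) 0 * \<delta> x = 0"
      have "PiP \<rho> \<mu> (qP, KP, \<Delta>P) \<delta> x = piP \<rho> \<mu> x + qW * \<Delta>W - max (price \<rho> \<mu> x - KW) 0 * \<Delta>W"
        using b unfolding PiP_def by simp
      then show "PiP \<rho> \<mu> (qP, KP, \<Delta>P) \<delta> x = qW * \<Delta>W + (1/\<rho> - 1) * max (\<mu> - x) 0 + (- \<beta>) * (if x \<le> \<mu> then 1 else 0)"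
        using KW by (auto simp: piP_def price_def \<beta>_def algebra_simps)
    qed
  qed
  show "var (unifM \<mu> \<sigma>) (PiW \<rho> \<mu> (qW, KW, \<Delta>W)) = var (unifM \<mu> \<sigma>) (piW \<rho> \<mu>)
            + ((1/\<rho> - KW) * \<Delta>W)\<^sup>2 / 4 - ((1/\<rho> - KW) * \<Delta>W) * (1/\<rho>) * (sqrt 3 * \<sigma>) / 4"
    unfolding e1 e2 varlin[OF s] \<beta>_def[symmetric] by (simp add: power2_eq_square)
  show "var (unifM \<mu> \<sigma>) (PiP \<rho> \<mu> (qP, KP, \<Delta>P) \<delta>) = var (unifM \<mu> \<sigma>) (piP \<rho> \<mu>)
            + ((1/\<rho> - KW) * \<Delta>W)\<^sup>2 / 4 - ((1/\<rho> - KW) * \<Delta>W) * (1/\<rho> - 1) * (sqrt 3 * \<sigma>) / 4"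
    unfolding e3 e4 varlin[OF s] \<beta>_def[symmetric] by (simp add: power2_eq_square)
qed

lemma ae_point: assumes s: "\<sigma> > 0" and P: "AE x in unifM \<mu> \<sigma>. P x" and ab: "a < b"
  and sub: "{a..b} \<subseteq> Omega \<mu> \<sigma>"
  shows "\<exists>x. a < x \<and> x < b \<and> P x"
proof (rule ccontr)
  assume "\<not> ?thesis"
  then have "AE x in unifM \<mu> \<sigma>. x \<notin> {a<..<b}" using P by (auto elim: AE_mp)
  then have "emeasure (unifM \<mu> \<sigma>) {x\<in>space (unifM \<mu> \<sigma>). \<not> x \<notin> {a<..<b}} = 0"
    by (subst (asm) AE_iff_measurable[OF _ refl]) (auto simp: unifM_def)
  moreover have "{x\<in>space (unifM \<mu> \<sigma>). \<not> x \<notin> {a<..<b}} = {a<..<b}" by (auto simp: unifM_def)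
  ultimately have "emeasure (unifM \<mu> \<sigma>) {a<..<b} = 0" by simp
  then have m0: "measure (unifM \<mu> \<sigma>) {a<..<b} = 0" by (simp add: measure_def)
  have "measure (unifM \<mu> \<sigma>) {a<..<b} = measure lborel (Omega \<mu> \<sigma> \<inter> {a<..<b}) / measure lborel (Omega \<mu> \<sigma>)"
    unfolding unifM_def by (rule measure_uniform_measure) (use s in \<open>auto simp: emeas_Omega\<close>)
  also have "Omega \<mu> \<sigma> \<inter> {a<..<b} = {a<..<b}" using sub by auto
  also have "measure lborel (Omega \<mu> \<sigma>) = 2 * sqrt 3 * \<sigma>" using s by (simp add: Omega_def)
  finally have "measure (unifM \<mu> \<sigma>) {a<..<b} = (b - a) / (2 * sqrt 3 * \<sigma>)" using ab by simp
  with m0 ab s show False by simp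
qed

lemma struct:
  assumes s: "\<sigma> > 0" and r: "0 < \<rho>" "\<rho> < 1"
    and F: "feasible \<rho> \<mu> \<sigma> (qW, KW, \<Delta>W) (qP, KP, \<Delta>P) \<delta>"
    and B: "(1/\<rho> - KW) * \<Delta>W = (2/\<rho> - 1) * (sqrt 3 * \<sigma>) / 4"
  shows "\<exists>\<Delta>\<in>{sqrt 3 * \<sigma> * (2 - \<rho>) / 4 .. sqrt 3 * \<sigma>}.
               (qW, KW, \<Delta>W) = (sqrt 3 * \<sigma> / (4 * \<rho> * \<Delta>) - sqrt 3 * \<sigma> / (8 * \<Delta>),
                     (1 / \<rho>) * ((2 * \<Delta> - sqrt 3 * \<sigma>) / (2 * \<Delta>)) + sqrt 3 * \<sigma> / (4 * \<Delta>),
                     \<Delta>) \<and>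
               (qP, KP, \<Delta>P) = (qW, KW, \<Delta>W)"
proof -
  define S where "S = sqrt 3 * \<sigma>"
  have S: "S > 0" using s by (simp add: S_def)
  from F have KW: "0 \<le> KW" "KW \<le> 1/\<rho>" "0 \<le> qW" "KW + 2 * qW \<le> 1/\<rho>" "\<Delta>W \<le> S" "0 \<le> \<Delta>W"
    and KP: "0 \<le> KP" "KP \<le> 1/\<rho>" "KP + 2 * qP \<ge> 1/\<rho>" and DD: "\<Delta>P = \<Delta>W"
    and dl: "AE \<omega> in unifM \<mu> \<sigma>. \<delta> \<omega> = \<Delta>W * (if price \<rho> \<mu> \<omega> \<ge> KW then 1 else 0)"
    and bal: "AE \<omega> in unifM \<mu> \<sigma>. qW * \<Delta>W - qP * \<Delta>P - max (price \<rho> \<mu> \<omega> - KW) 0 * \<Delta>W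
                           + max (price \<rho> \<mu> \<omega> - KP) 0 * \<delta> \<omega> = 0"
    unfolding feasible_def AW_def AP_def A0_def S_def by auto
  have rr: "2/\<rho> - 1 > 0" using r by (simp add: field_simps)
  have "\<Delta>W \<noteq> 0" using B rr S unfolding S_def[symmetric] by auto
  with KW have Dp: "\<Delta>W > 0" by simp
  have both: "AE \<omega> in unifM \<mu> \<sigma>. \<delta> \<omega> = \<Delta>W * (if price \<rho> \<mu> \<omega> \<ge> KW then 1 else 0) \<and>
      qW * \<Delta>W - qP * \<Delta>P - max (price \<rho> \<mu> \<omega> - KW) 0 * \<Delta>W + max (price \<rho> \<mu> \<omega> - KP) 0 * \<delta> \<omega> = 0"
    using dl bal by (auto elim: AE_mp)
  obtain x1 where x1: "\<mu> < x1" "qW * \<Delta>W - qP * \<Delta>P - max (price \<rho> \<mu> x1 - KW) 0 * \<Delta>W + max (price \<rho> \<mu> x1 - KP) 0 * \<delta> x1 = 0"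
    using ae_point[OF s both, of \<mu> "\<mu> + sqrt 3 * \<sigma>"] s by (auto simp: Omega_def)
  obtain x2 where x2: "x2 < \<mu>" "\<delta> x2 = \<Delta>W * (if price \<rho> \<mu> x2 \<ge> KW then 1 else 0)"
     "qW * \<Delta>W - qP * \<Delta>P - max (price \<rho> \<mu> x2 - KW) 0 * \<Delta>W + max (price \<rho> \<mu> x2 - KP) 0 * \<delta> x2 = 0"
    using ae_point[OF s both, of "\<mu> - sqrt 3 * \<sigma>" \<mu>] s by (auto simp: Omega_def)
  have "(qW - qP) * \<Delta>W = 0" using x1 KW KP DD by (simp add: price_def algebra_simps)
  then have qq: "qP = qW" using Dp by simp
  have "(KW - KP) * \<Delta>W = 0" using x2 KW KP DD qq by (simp add: price_def algebra_simps)
  then have KK: "KP = KW" using Dp by simp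
  have Keq: "KW = 1/\<rho> - 2 * qW" using KW KP qq KK by linarith
  have q2: "2 * qW * \<Delta>W = (2/\<rho> - 1) * S / 4" using B unfolding Keq S_def by (simp add: algebra_simps)
  have qW: "qW = (2/\<rho> - 1) * S / (8 * \<Delta>W)" using q2 Dp by (simp add: field_simps)
  show ?thesis
  proof (intro bexI conjI)
    show "(qW, KW, \<Delta>W) = (sqrt 3 * \<sigma> / (4 * \<rho> * \<Delta>W) - sqrt 3 * \<sigma> / (8 * \<Delta>W),
                     (1 / \<rho>) * ((2 * \<Delta>W - sqrt 3 * \<sigma>) / (2 * \<Delta>W)) + sqrt 3 * \<sigma> / (4 * \<Delta>W), \<Delta>W)"
      unfolding S_def[symmetric] Keq qW using Dp r by (auto simp: field_simps)
    show "(qP, KP, \<Delta>P) = (qW, KW, \<Delta>W)" using qq KK DD by simp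
    have "2 * qW \<le> 1/\<rho>" using KW Keq by linarith
    then have b: "\<rho> * (2 * qW) \<le> 1" using r by (simp add: field_simps)
    have a: "(2 - \<rho>) * S = 4 * \<Delta>W * (\<rho> * (2 * qW))" using q2 r by (simp add: field_simps)
    have "4 * \<Delta>W * (\<rho> * (2 * qW)) \<le> 4 * \<Delta>W * 1" using b Dp by (intro mult_left_mono) auto
    then have "(2 - \<rho>) * S \<le> 4 * \<Delta>W" using a by simp
    then show "\<Delta>W \<in> {sqrt 3 * \<sigma> * (2 - \<rho>) / 4 .. sqrt 3 * \<sigma>}" using KW unfolding S_def by (auto simp: field_simps)
  qed
qed

lemma witness:
  assumes s: "\<sigma> > 0" and r: "0 < \<rho>" "\<rho> < 1"
    and D: "\<Delta> \<in> {sqrt 3 * \<sigma> * (2 - \<rho>) / 4 .. sqrt 3 * \<sigma>}"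
    and qd: "q = sqrt 3 * \<sigma> / (4 * \<rho> * \<Delta>) - sqrt 3 * \<sigma> / (8 * \<Delta>)"
    and Kd: "K = (1 / \<rho>) * ((2 * \<Delta> - sqrt 3 * \<sigma>) / (2 * \<Delta>)) + sqrt 3 * \<sigma> / (4 * \<Delta>)"
  shows "feasible \<rho> \<mu> \<sigma> (q, K, \<Delta>) (q, K, \<Delta>) (\<lambda>\<omega>. \<Delta> * (if price \<rho> \<mu> \<omega> \<ge> K then 1 else 0))"
    and "(1/\<rho> - K) * \<Delta> = (2/\<rho> - 1) * (sqrt 3 * \<sigma>) / 4"
proof -
  define S where "S = sqrt 3 * \<sigma>"
  have S: "S > 0" using s by (simp add: S_def)
  have D1: "S * (2 - \<rho>) / 4 \<le> \<Delta>" "\<Delta> \<le> S" using D by (auto simp: S_def)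
  have "S * (2 - \<rho>) / 4 > 0" using S r by simp
  then have Dp: "\<Delta> > 0" using D1 by linarith
  have q: "q = (2/\<rho> - 1) * S / (8 * \<Delta>)" unfolding qd S_def[symmetric] using Dp r by (simp add: field_simps)
  have K: "K = 1/\<rho> - 2 * q" unfolding Kd q S_def[symmetric] using Dp r by (simp add: field_simps)
  have rr: "2/\<rho> - 1 > 0" using r by (simp add: field_simps)
  have q0: "q \<ge> 0" unfolding q using rr S Dp by simp
  have a: "(2 - \<rho>) * S = 4 * \<Delta> * (\<rho> * (2 * q))" unfolding q using Dp r by (simp add: field_simps)
  have "4 * \<Delta> * (\<rho> * (2 * q)) \<le> 4 * \<Delta> * 1" using a D1 by (simp add: algebra_simps)
  then have "\<rho> * (2 * q) \<le> 1" using Dp by simp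
  then have q2: "2 * q \<le> 1/\<rho>" using r by (simp add: field_simps)
  have mem: "(q, K, \<Delta>) \<in> AW \<rho> \<sigma>" "(q, K, \<Delta>) \<in> AP \<rho> \<sigma>"
    using q0 q2 K D1 Dp r unfolding AW_def AP_def A0_def S_def by auto
  show "feasible \<rho> \<mu> \<sigma> (q, K, \<Delta>) (q, K, \<Delta>) (\<lambda>\<omega>. \<Delta> * (if price \<rho> \<mu> \<omega> \<ge> K then 1 else 0))"
    unfolding feasible_def using mem Dp
    by (auto simp: price_def unifM_def intro!: AE_I2)
  show "(1/\<rho> - K) * \<Delta> = (2/\<rho> - 1) * (sqrt 3 * \<sigma>) / 4"
    unfolding K q S_def[symmetric] using Dp by (simp add: field_simps)
qed

theorem proposition5:
  fixes \<mu> \<sigma> \<rho> :: real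
  assumes "\<mu> > 0" "\<sigma> > 0" "\<mu> \<ge> sqrt 3 * \<sigma>" "0 < \<rho>" "\<rho> < 1"
  shows "(\<forall>tW tP \<delta>. optimal \<rho> \<mu> \<sigma> tW tP \<delta> \<longleftrightarrow>
            feasible \<rho> \<mu> \<sigma> tW tP \<delta> \<and>
            (\<exists>\<Delta>\<in>{sqrt 3 * \<sigma> * (2 - \<rho>) / 4 .. sqrt 3 * \<sigma>}.
               tW = (sqrt 3 * \<sigma> / (4 * \<rho> * \<Delta>) - sqrt 3 * \<sigma> / (8 * \<Delta>),
                     (1 / \<rho>) * ((2 * \<Delta> - sqrt 3 * \<sigma>) / (2 * \<Delta>)) + sqrt 3 * \<sigma> / (4 * \<Delta>),
                     \<Delta>) \<and>
               tP = tW))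
       \<and> (\<forall>\<Delta>\<in>{sqrt 3 * \<sigma> * (2 - \<rho>) / 4 .. sqrt 3 * \<sigma>}. \<exists>\<delta>.
            optimal \<rho> \<mu> \<sigma>
              (sqrt 3 * \<sigma> / (4 * \<rho> * \<Delta>) - sqrt 3 * \<sigma> / (8 * \<Delta>),
               (1 / \<rho>) * ((2 * \<Delta> - sqrt 3 * \<sigma>) / (2 * \<Delta>)) + sqrt 3 * \<sigma> / (4 * \<Delta>), \<Delta>)
              (sqrt 3 * \<sigma> / (4 * \<rho> * \<Delta>) - sqrt 3 * \<sigma> / (8 * \<Delta>),
               (1 / \<rho>) * ((2 * \<Delta> - sqrt 3 * \<sigma>) / (2 * \<Delta>)) + sqrt 3 * \<sigma> / (4 * \<Delta>), \<Delta>)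
              \<delta>)
       \<and> (\<forall>tW tP \<delta>. optimal \<rho> \<mu> \<sigma> tW tP \<delta> \<longrightarrow>
            (var (unifM \<mu> \<sigma>) (PiW \<rho> \<mu> tW) - var (unifM \<mu> \<sigma>) (piW \<rho> \<mu>))
            + (var (unifM \<mu> \<sigma>) (PiP \<rho> \<mu> tP \<delta>) - var (unifM \<mu> \<sigma>) (piP \<rho> \<mu>))
            = - (3 * \<sigma>\<^sup>2 / 8) * (1 / \<rho> - 1 / 2)\<^sup>2)
       \<and> - (3 * \<sigma>\<^sup>2 / 8) * (1 / \<rho> - 1 / 2)\<^sup>2 < 0"
  proof -
  note s = assms(2) and r = assms(4,5)
  define S where "S = sqrt 3 * \<sigma>"
  have S: "S > 0" using s by (simp add: S_def)
  define bs where "bs = (2/\<rho> - 1) * S / 4"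
  define G where "G = (\<lambda>\<beta>::real. \<beta>\<^sup>2 / 2 - \<beta> * (2/\<rho> - 1) * S / 4)"
  define V0 where "V0 = var (unifM \<mu> \<sigma>) (piW \<rho> \<mu>) + var (unifM \<mu> \<sigma>) (piP \<rho> \<mu>)"
  have bk: "b * (2/\<rho> - 1) * S / 4 = b * bs" for b unfolding bs_def by simp
  have Gm: "G bs \<le> G b" for b
  proof -
    have "G b - G bs = (b - bs)\<^sup>2 / 2" unfolding G_def bk by (simp add: power2_eq_square algebra_simps)
    moreover have "(b - bs)\<^sup>2 / 2 \<ge> 0" by simp
    ultimately show ?thesis by linarith
  qed
  have Geq: "G b \<le> G bs \<Longrightarrow> b = bs" for b
  proof -
    assume "G b \<le> G bs"
    moreover have "G b - G bs = (b - bs)\<^sup>2 / 2" unfolding G_def bk by (simp add: power2_eq_square algebra_simps)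
    ultimately have "(b - bs)\<^sup>2 \<le> 0" by linarith
    then show "b = bs" by simp
  qed
  have vf: "var (unifM \<mu> \<sigma>) (PiW \<rho> \<mu> (qW, KW, \<Delta>W)) - var (unifM \<mu> \<sigma>) (piW \<rho> \<mu>)
      + (var (unifM \<mu> \<sigma>) (PiP \<rho> \<mu> (qP, KP, \<Delta>P) \<delta>) - var (unifM \<mu> \<sigma>) (piP \<rho> \<mu>)) = G ((1/\<rho> - KW) * \<Delta>W)"
    if "feasible \<rho> \<mu> \<sigma> (qW, KW, \<Delta>W) (qP, KP, \<Delta>P) \<delta>" for qW KW \<Delta>W qP KP \<Delta>P \<delta>
  proof -
    have g: "b\<^sup>2 / 4 - b * (1/\<rho>) * (sqrt 3 * \<sigma>) / 4 + (b\<^sup>2 / 4 - b * (1/\<rho> - 1) * (sqrt 3 * \<sigma>) / 4) = G b" for b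
      unfolding G_def S_def using r by (simp add: field_simps power2_eq_square)
    show ?thesis using var_feas[OF s r(1) that] g[of "(1/\<rho> - KW) * \<Delta>W"] by linarith
  qed
  have ob: "objective \<rho> \<mu> \<sigma> (qW, KW, \<Delta>W) (qP, KP, \<Delta>P) \<delta> = V0 + G ((1/\<rho> - KW) * \<Delta>W)"
    if "feasible \<rho> \<mu> \<sigma> (qW, KW, \<Delta>W) (qP, KP, \<Delta>P) \<delta>" for qW KW \<Delta>W qP KP \<Delta>P \<delta>
    using vf[OF that] unfolding objective_def V0_def by simp
  have Sin: "S \<in> {sqrt 3 * \<sigma> * (2 - \<rho>) / 4 .. sqrt 3 * \<sigma>}" using S r s unfolding S_def by (auto intro!: mult_left_mono)
  have bsS: "(2/\<rho> - 1) * (sqrt 3 * \<sigma>) / 4 = bs" unfolding bs_def S_def ..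
  note w = witness[OF s r Sin refl refl]
  have wob: "objective \<rho> \<mu> \<sigma> (sqrt 3 * \<sigma> / (4 * \<rho> * S) - sqrt 3 * \<sigma> / (8 * S),
               (1 / \<rho>) * ((2 * S - sqrt 3 * \<sigma>) / (2 * S)) + sqrt 3 * \<sigma> / (4 * S), S)
       (sqrt 3 * \<sigma> / (4 * \<rho> * S) - sqrt 3 * \<sigma> / (8 * S),
               (1 / \<rho>) * ((2 * S - sqrt 3 * \<sigma>) / (2 * S)) + sqrt 3 * \<sigma> / (4 * S), S)
       (\<lambda>\<omega>. S * (if price \<rho> \<mu> \<omega> \<ge> (1 / \<rho>) * ((2 * S - sqrt 3 * \<sigma>) / (2 * S)) + sqrt 3 * \<sigma> / (4 * S) then 1 else 0))
      = V0 + G bs"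
    unfolding ob[OF w(1)] w(2) bsS ..
  have opt1: "optimal \<rho> \<mu> \<sigma> (qW, KW, \<Delta>W) tP \<delta> \<longleftrightarrow> feasible \<rho> \<mu> \<sigma> (qW, KW, \<Delta>W) tP \<delta> \<and> (1/\<rho> - KW) * \<Delta>W = bs"
    for qW KW \<Delta>W tP \<delta>
  proof (cases tP)
    case (fields qP KP \<Delta>P)
    show ?thesis
    proof
      assume o: "optimal \<rho> \<mu> \<sigma> (qW, KW, \<Delta>W) tP \<delta>"
      then have f: "feasible \<rho> \<mu> \<sigma> (qW, KW, \<Delta>W) (qP, KP, \<Delta>P) \<delta>" unfolding optimal_def fields by simp
      have "objective \<rho> \<mu> \<sigma> (qW, KW, \<Delta>W) tP \<delta> \<le> V0 + G bs"
        using o w(1) unfolding optimal_def wob[symmetric] by blast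
      then have "G ((1/\<rho> - KW) * \<Delta>W) \<le> G bs" unfolding fields ob[OF f] by simp
      then show "feasible \<rho> \<mu> \<sigma> (qW, KW, \<Delta>W) tP \<delta> \<and> (1/\<rho> - KW) * \<Delta>W = bs"
        using f Geq fields by simp
    next
      assume a: "feasible \<rho> \<mu> \<sigma> (qW, KW, \<Delta>W) tP \<delta> \<and> (1/\<rho> - KW) * \<Delta>W = bs"
      then have f: "feasible \<rho> \<mu> \<sigma> (qW, KW, \<Delta>W) (qP, KP, \<Delta>P) \<delta>" using fields by simp
      show "optimal \<rho> \<mu> \<sigma> (qW, KW, \<Delta>W) tP \<delta>"
        unfolding optimal_def
      proof (intro conjI allI impI)
        show "feasible \<rho> \<mu> \<sigma> (qW, KW, \<Delta>W) tP \<delta>" using a by simp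
        fix tW' tP' \<delta>' assume f': "feasible \<rho> \<mu> \<sigma> tW' tP' \<delta>'"
        obtain qW' KW' \<Delta>W' where tw: "tW' = (qW', KW', \<Delta>W')" by (cases tW') auto
        obtain qP' KP' \<Delta>P' where tp: "tP' = (qP', KP', \<Delta>P')" by (cases tP') auto
        show "objective \<rho> \<mu> \<sigma> (qW, KW, \<Delta>W) tP \<delta> \<le> objective \<rho> \<mu> \<sigma> tW' tP' \<delta>'"
          using f' unfolding fields ob[OF f] tw tp using ob Gm a by simp
      qed
    qed
  qed
  have opt: "optimal \<rho> \<mu> \<sigma> tW tP \<delta> \<longleftrightarrow> feasible \<rho> \<mu> \<sigma> tW tP \<delta> \<and> (1/\<rho> - fst (snd tW)) * snd (snd tW) = bs"
    for tW tP \<delta> by (cases tW) (simp add: opt1)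
  show ?thesis
  proof (intro conjI allI ballI impI)
    fix tW tP \<delta>
    show "optimal \<rho> \<mu> \<sigma> tW tP \<delta> \<longleftrightarrow>
            feasible \<rho> \<mu> \<sigma> tW tP \<delta> \<and>
            (\<exists>\<Delta>\<in>{sqrt 3 * \<sigma> * (2 - \<rho>) / 4 .. sqrt 3 * \<sigma>}.
               tW = (sqrt 3 * \<sigma> / (4 * \<rho> * \<Delta>) - sqrt 3 * \<sigma> / (8 * \<Delta>),
                     (1 / \<rho>) * ((2 * \<Delta> - sqrt 3 * \<sigma>) / (2 * \<Delta>)) + sqrt 3 * \<sigma> / (4 * \<Delta>),
                     \<Delta>) \<and>
               tP = tW)"
    proof -
      obtain qW KW \<Delta>W where tw: "tW = (qW, KW, \<Delta>W)" by (cases tW) auto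
      obtain qP KP \<Delta>P where tp: "tP = (qP, KP, \<Delta>P)" by (cases tP) auto
      show ?thesis
      proof
        assume "optimal \<rho> \<mu> \<sigma> tW tP \<delta>"
        then have f: "feasible \<rho> \<mu> \<sigma> (qW, KW, \<Delta>W) (qP, KP, \<Delta>P) \<delta>" and b: "(1/\<rho> - KW) * \<Delta>W = bs"
          unfolding opt tw tp by auto
        show "feasible \<rho> \<mu> \<sigma> tW tP \<delta> \<and>
            (\<exists>\<Delta>\<in>{sqrt 3 * \<sigma> * (2 - \<rho>) / 4 .. sqrt 3 * \<sigma>}.
               tW = (sqrt 3 * \<sigma> / (4 * \<rho> * \<Delta>) - sqrt 3 * \<sigma> / (8 * \<Delta>),
                     (1 / \<rho>) * ((2 * \<Delta> - sqrt 3 * \<sigma>) / (2 * \<Delta>)) + sqrt 3 * \<sigma> / (4 * \<Delta>),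
                     \<Delta>) \<and>
               tP = tW)"
          using f struct[OF s r f b[folded bsS]] unfolding tw tp by simp
      next
        assume a: "feasible \<rho> \<mu> \<sigma> tW tP \<delta> \<and>
            (\<exists>\<Delta>\<in>{sqrt 3 * \<sigma> * (2 - \<rho>) / 4 .. sqrt 3 * \<sigma>}.
               tW = (sqrt 3 * \<sigma> / (4 * \<rho> * \<Delta>) - sqrt 3 * \<sigma> / (8 * \<Delta>),
                     (1 / \<rho>) * ((2 * \<Delta> - sqrt 3 * \<sigma>) / (2 * \<Delta>)) + sqrt 3 * \<sigma> / (4 * \<Delta>),
                     \<Delta>) \<and>
               tP = tW)"
        then obtain \<Delta> where D: "\<Delta>\<in>{sqrt 3 * \<sigma> * (2 - \<rho>) / 4 .. sqrt 3 * \<sigma>}"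
          and tW: "tW = (sqrt 3 * \<sigma> / (4 * \<rho> * \<Delta>) - sqrt 3 * \<sigma> / (8 * \<Delta>),
                     (1 / \<rho>) * ((2 * \<Delta> - sqrt 3 * \<sigma>) / (2 * \<Delta>)) + sqrt 3 * \<sigma> / (4 * \<Delta>),
                     \<Delta>)" by blast
        have "(1 / \<rho> - fst (snd tW)) * snd (snd tW) = bs"
          using witness(2)[OF s r D refl refl] bsS unfolding tW by simp
        then show "optimal \<rho> \<mu> \<sigma> tW tP \<delta>" unfolding opt using a by blast
      qed
    qed
  next
    fix \<Delta> assume D: "\<Delta>\<in>{sqrt 3 * \<sigma> * (2 - \<rho>) / 4 .. sqrt 3 * \<sigma>}"
    note w2 = witness[OF s r D refl refl]
    show "\<exists>\<delta>. optimal \<rho> \<mu> \<sigma>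
              (sqrt 3 * \<sigma> / (4 * \<rho> * \<Delta>) - sqrt 3 * \<sigma> / (8 * \<Delta>),
               (1 / \<rho>) * ((2 * \<Delta> - sqrt 3 * \<sigma>) / (2 * \<Delta>)) + sqrt 3 * \<sigma> / (4 * \<Delta>), \<Delta>)
              (sqrt 3 * \<sigma> / (4 * \<rho> * \<Delta>) - sqrt 3 * \<sigma> / (8 * \<Delta>),
               (1 / \<rho>) * ((2 * \<Delta> - sqrt 3 * \<sigma>) / (2 * \<Delta>)) + sqrt 3 * \<sigma> / (4 * \<Delta>), \<Delta>)
              \<delta>"
      by (rule exI, subst opt1) (use w2 bsS in simp)
  next
    fix tW tP \<delta> assume o: "optimal \<rho> \<mu> \<sigma> tW tP \<delta>"
    obtain qW KW \<Delta>W where tw: "tW = (qW, KW, \<Delta>W)" by (cases tW) auto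
    obtain qP KP \<Delta>P where tp: "tP = (qP, KP, \<Delta>P)" by (cases tP) auto
    from o have f: "feasible \<rho> \<mu> \<sigma> (qW, KW, \<Delta>W) (qP, KP, \<Delta>P) \<delta>" and b: "(1/\<rho> - KW) * \<Delta>W = bs"
      unfolding opt tw tp by auto
    have g1: "G bs = - bs\<^sup>2 / 2" unfolding G_def bk by (simp add: power2_eq_square)
    have t: "2/\<rho> - 1 = 2 * (1/\<rho> - 1/2)" by simp
    have t2: "(2/\<rho> - 1)\<^sup>2 = 4 * (1/\<rho> - 1/2)\<^sup>2" using r by (simp add: power2_eq_square field_simps)
    have "bs\<^sup>2 = (2 * (1/\<rho> - 1/2))\<^sup>2 * (sqrt 3)\<^sup>2 * \<sigma>\<^sup>2 / 16" unfolding bs_def S_def t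
      by (simp add: power_mult_distrib power_divide)
    also have "\<dots> = (1/\<rho> - 1/2)\<^sup>2 * 3 * \<sigma>\<^sup>2 / 4"
    proof -
      have "\<And>x::real. (2 * x)\<^sup>2 * (sqrt 3)\<^sup>2 * \<sigma>\<^sup>2 / 16 = x\<^sup>2 * 3 * \<sigma>\<^sup>2 / 4" by (simp add: power_mult_distrib)
      then show ?thesis by blast
    qed
    finally have "G bs = - (3 * \<sigma>\<^sup>2 / 8) * (1 / \<rho> - 1 / 2)\<^sup>2" unfolding g1 by (simp add: algebra_simps)
    then show "(var (unifM \<mu> \<sigma>) (PiW \<rho> \<mu> tW) - var (unifM \<mu> \<sigma>) (piW \<rho> \<mu>))
            + (var (unifM \<mu> \<sigma>) (PiP \<rho> \<mu> tP \<delta>) - var (unifM \<mu> \<sigma>) (piP \<rho> \<mu>))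
            = - (3 * \<sigma>\<^sup>2 / 8) * (1 / \<rho> - 1 / 2)\<^sup>2"
      using vf[OF f] b unfolding tw tp by simp
  next
    have "1 / \<rho> - 1 / 2 > 0" using r by (simp add: field_simps)
    then have "(1 / \<rho> - 1 / 2)\<^sup>2 > 0" by (rule zero_less_power)
    moreover have "3 * \<sigma>\<^sup>2 / 8 > 0" using s by simp
    ultimately have "(3 * \<sigma>\<^sup>2 / 8) * (1 / \<rho> - 1 / 2)\<^sup>2 > 0" by (rule mult_pos_pos[rotated])
    then show "- (3 * \<sigma>\<^sup>2 / 8) * (1 / \<rho> - 1 / 2)\<^sup>2 < 0" by simp
  qed
qed

end
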